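(* (1) Let $M=2N-1$ and let $\mathcal F=\{f_1,\dots,f_M\}$ be a frame for $\mathbb R^N$. If $\mathbb M^{\mathcal F}$ is injective, then every $N$-element subset of $\mathcal F$ is linearly independent. (2) Let $N\ge 2$ and $M\ge 2N$. Then there exists an $M$-element frame $\mathcal F$ for $\mathbb R^N$ such that $\mathbb M^{\mathcal F}$ is injective but some $N$-element subset of $\mathcal F$ is linearly dependent.
   Context: A frame for $\mathbb R^N$ is a spanning family $\{f_1,\dots,f_M\}$ (indexed, repetitions allowed). $\mathbb M^{\mathcal F}:\mathbb R^N/\{\pm1\}\to\mathbb R^M$, $\hat x\mapsto(|\langle x,f_k\rangle|)_k$; injectivity means $|\langle x,f_k\rangle|=|\langle y,f_k\rangle|$ for all $k$ implies $y=\pm x$. *)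

theory Defs
  imports "HOL-Analysis.Analysis"
begin

text \<open>A frame for R^N with M elements is an indexed family f 0, ..., f (M-1) of vectors
  (repetitions allowed) spanning R^N. Here R^N is real^'n with N = CARD('n).\<close>

definition is_frame :: "nat \<Rightarrow> (nat \<Rightarrow> real^'n) \<Rightarrow> bool" where
  "is_frame M f \<longleftrightarrow> span (f ` {..<M}) = UNIV"

text \<open>Injectivity of the measurement map x mod sign to (|<x,f_k>|)_k.\<close>

definition phase_retrievable :: "nat \<Rightarrow> (nat \<Rightarrow> real^'n) \<Rightarrow> bool" where
  "phase_retrievable M f \<longleftrightarrow>
     (\<forall>x y::real^'n. (\<forall>k<M. \<bar>x \<bullet> f k\<bar> = \<bar>y \<bullet> f k\<bar>) \<longrightarrow> y = x \<or> y = - x)"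

definition lin_indep_family :: "(nat \<Rightarrow> real^'n) \<Rightarrow> nat set \<Rightarrow> bool" where
  "lin_indep_family f I \<longleftrightarrow>
     (\<forall>c::nat \<Rightarrow> real. (\<Sum>i\<in>I. c i *\<^sub>R f i) = 0 \<longrightarrow> (\<forall>i\<in>I. c i = 0))"

end

theory Submission
  imports Defs
begin


lemma orth_small:
  fixes f :: "nat \<Rightarrow> real^'n"
  assumes "finite J" "card J < CARD('n)"
  shows "\<exists>u. u \<noteq> 0 \<and> (\<forall>i\<in>J. u \<bullet> f i = 0)"
proof -
  have "dim (f ` J) \<le> card (f ` J)"
    by (rule dim_le_card) (auto intro: span_base simp: assms)
  also have "\<dots> \<le> card J" by (rule card_image_le[OF assms(1)])
  finally have d: "dim (f ` J) < CARD('n)" using assms by simp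
  have "span (f ` J) \<noteq> UNIV"
  proof
    assume "span (f ` J) = UNIV"
    then have "dim (span (f ` J)) = dim (UNIV :: (real^'n) set)" by simp
    then show False using d by (simp add: dim_span)
  qed
  then obtain a :: "real^'n" where "a \<noteq> 0" "\<forall>x \<in> span (f ` J). a \<bullet> x = 0"
    using span_not_UNIV_orthogonal by blast
  then show ?thesis by (auto intro!: exI[of _ a] span_base)
qed

lemma part1:
  fixes f :: "nat \<Rightarrow> real^'n"
  assumes pr: "phase_retrievable (2 * CARD('n) - 1) f"
    and I: "I \<subseteq> {..<2 * CARD('n) - 1}" "card I = CARD('n)"
  shows "lin_indep_family f I"
proof (rule ccontr)
  let ?N = "CARD('n)"
  assume "\<not> lin_indep_family f I"
  then obtain c i where c: "(\<Sum>i\<in>I. c i *\<^sub>R f i) = 0" "i \<in> I" "c i \<noteq> 0"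
    unfolding lin_indep_family_def by blast
  have fI: "finite I" using I(1) finite_subset by blast
  have "card (I - {i}) < ?N" using I c fI by (simp add: card_Diff_singleton)
  then obtain u where u: "u \<noteq> 0" "\<forall>j\<in>I - {i}. u \<bullet> f j = 0"
    using orth_small[of "I - {i}" f] fI by blast
  have "0 = u \<bullet> (\<Sum>i\<in>I. c i *\<^sub>R f i)" using c by simp
  also have "\<dots> = (\<Sum>j\<in>I. c j * (u \<bullet> f j))" by (simp add: inner_sum_right)
  also have "\<dots> = c i * (u \<bullet> f i) + (\<Sum>j\<in>I - {i}. c j * (u \<bullet> f j))"
    using fI c(2) by (simp add: sum.remove)
  also have "(\<Sum>j\<in>I - {i}. c j * (u \<bullet> f j)) = 0" using u by simp
  finally have "u \<bullet> f i = 0" using c(3) by simp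
  with u have uI: "\<forall>j\<in>I. u \<bullet> f j = 0" by blast
  have "card ({..<2 * ?N - 1} - I) = 2 * ?N - 1 - ?N" using I fI by (simp add: card_Diff_subset)
  then have "card ({..<2 * ?N - 1} - I) < ?N" by simp
  then obtain v where v: "v \<noteq> 0" "\<forall>j\<in>{..<2 * ?N - 1} - I. v \<bullet> f j = 0"
    using orth_small[of "{..<2 * ?N - 1} - I" f] by blast
  have "\<forall>k<2 * ?N - 1. \<bar>(u + v) \<bullet> f k\<bar> = \<bar>(u - v) \<bullet> f k\<bar>"
  proof (intro allI impI)
    fix k assume "k < 2 * ?N - 1"
    then show "\<bar>(u + v) \<bullet> f k\<bar> = \<bar>(u - v) \<bullet> f k\<bar>"
      using uI v by (cases "k \<in> I") (auto simp: inner_add_left inner_diff_left)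
  qed
  then have "u - v = u + v \<or> u - v = - (u + v)" using pr unfolding phase_retrievable_def by blast
  then show False
  proof
    assume "u - v = u + v" then have "2 *\<^sub>R v = 0" by (simp add: algebra_simps scaleR_2)
    then show False using v by simp
  next
    assume "u - v = - (u + v)" then have "2 *\<^sub>R u = 0" by (simp add: algebra_simps scaleR_2)
    then show False using u by simp
  qed
qed

lemma vander_zero:
  fixes h :: "'n::finite \<Rightarrow> nat" and z :: "real^'n"
  assumes h: "bij_betw h UNIV {0..<CARD('n)}"
    and S: "finite (S::real set)" "card S \<ge> CARD('n)"
    and z: "\<forall>t\<in>S. (\<Sum>i\<in>UNIV. z$i * t ^ h i) = 0"
  shows "z = 0"
proof (rule ccontr)
  let ?N = "CARD('n)"
  let ?g = "inv_into UNIV h"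
  define c where "c j = z $ ?g j" for j
  assume "z \<noteq> 0"
  then obtain i where i: "z $ i \<noteq> 0" by (metis vec_eq_iff zero_index)
  have "h i \<in> {0..<?N}" using h unfolding bij_betw_def by auto
  then have hi: "h i \<le> ?N - 1" by auto
  have gh: "?g (h i) = i" using h by (simp add: bij_betw_def)
  have ck: "c (h i) \<noteq> 0" using i gh c_def by simp
  have eq: "(\<Sum>i\<in>UNIV. z$i * t ^ h i) = (\<Sum>j\<le>?N - 1. c j * t ^ j)" for t
  proof -
    have "(\<Sum>i\<in>UNIV. z$i * t ^ h i) = (\<Sum>j\<in>{0..<?N}. c j * t ^ j)"
    proof -
      have "(\<Sum>j\<in>{0..<?N}. c j * t ^ j) = (\<Sum>x\<in>UNIV. c (h x) * t ^ h x)"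
        by (rule sum.reindex_bij_betw[OF h, symmetric])
      also have "\<dots> = (\<Sum>i\<in>UNIV. z $ i * t ^ h i)"
        using h by (simp add: c_def bij_betw_def)
      finally show ?thesis by simp
    qed
    also have "{0..<?N} = {..?N - 1}"
      proof -
        have "?N > 0" by simp
        then show ?thesis by (auto simp: less_Suc_eq_le[symmetric])
      qed
    finally show ?thesis .
  qed
  from polyfun_rootbound[of "?N - 1" c] ck hi
  have fin: "finite {t. (\<Sum>j\<le>?N - 1. c j * t ^ j) = 0}"
    and cb: "card {t. (\<Sum>j\<le>?N - 1. c j * t ^ j) = 0} \<le> ?N - 1" by auto
  have "S \<subseteq> {t. (\<Sum>j\<le>?N - 1. c j * t ^ j) = 0}" using z eq by auto
  then have "card S \<le> ?N - 1" using card_mono[OF fin] cb by (meson le_trans)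
  moreover have "?N > 0" by simp
  ultimately show False using S(2) by linarith
qed

lemma part2:
  assumes N2: "CARD('n::finite) \<ge> 2" and M: "M \<ge> 2 * CARD('n)"
  shows "\<exists>f::nat \<Rightarrow> real^'n. is_frame M f \<and> phase_retrievable M f \<and>
               (\<exists>I. I \<subseteq> {..<M} \<and> card I = CARD('n) \<and> \<not> lin_indep_family f I)"
proof -
  let ?N = "CARD('n)"
  let ?L = "2 * ?N - 1"
  obtain h :: "'n \<Rightarrow> nat" where h: "bij_betw h UNIV {0..<?N}"
    using ex_bij_betw_finite_nat[of "UNIV :: 'n set"] by auto
  define t where "t k = real (k mod ?L)" for k
  define f :: "nat \<Rightarrow> real^'n" where "f k = (\<chi> i. t k ^ h i)" for k
  have ip: "z \<bullet> f k = (\<Sum>i\<in>UNIV. z$i * t k ^ h i)" for z k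
    by (simp add: f_def inner_vec_def)
  have key: "z = 0" if S: "S \<subseteq> {..<?L}" "card S \<ge> ?N" "\<forall>k\<in>S. z \<bullet> f k = 0" for S z
  proof (rule vander_zero[OF h, of "real ` S"])
    have fS: "finite S" using S(1) finite_subset by blast
    show "finite (real ` S)" using fS by simp
    show "?N \<le> card (real ` S)" using S(2) by (simp add: card_image inj_on_def)
    show "\<forall>s\<in>real ` S. (\<Sum>i\<in>UNIV. z $ i * s ^ h i) = 0"
    proof
      fix s assume "s \<in> real ` S"
      then obtain k where k: "k \<in> S" "s = real k" by auto
      then have "t k = s" using S(1) by (auto simp: t_def)
      then show "(\<Sum>i\<in>UNIV. z $ i * s ^ h i) = 0" using S(3) k ip by metis
    qed
  qed
  have pr: "phase_retrievable M f"
    unfolding phase_retrievable_def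
  proof (intro allI impI)
    fix x y :: "real^'n"
    assume a: "\<forall>k<M. \<bar>x \<bullet> f k\<bar> = \<bar>y \<bullet> f k\<bar>"
    define S where "S = {k\<in>{..<?L}. x \<bullet> f k = y \<bullet> f k}"
    define T where "T = {k\<in>{..<?L}. x \<bullet> f k = - (y \<bullet> f k)}"
    have "{..<?L} = S \<union> T"
    proof safe
      fix k assume "k < ?L" "k \<notin> T"
      then have "\<bar>x \<bullet> f k\<bar> = \<bar>y \<bullet> f k\<bar>" using a M by auto
      then show "k \<in> S" using \<open>k < ?L\<close> \<open>k \<notin> T\<close> unfolding S_def T_def by (auto simp: abs_eq_iff)
    qed (auto simp: S_def T_def)
    then have "?L \<le> card S + card T" by (metis card_Un_le card_lessThan)
    then have "card S \<ge> ?N \<or> card T \<ge> ?N" by linarith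
    then show "y = x \<or> y = - x"
    proof
      assume "card S \<ge> ?N"
      then have "x - y = 0" by (intro key[of S]) (auto simp: S_def inner_diff_left)
      then show ?thesis by simp
    next
      assume "card T \<ge> ?N"
      then have "x + y = 0" by (intro key[of T]) (auto simp: T_def inner_add_left)
      then show ?thesis by (simp add: add_eq_0_iff2)
    qed
  qed
  have fr: "is_frame M f"
    unfolding is_frame_def
  proof (rule ccontr)
    assume "span (f ` {..<M}) \<noteq> UNIV"
    then obtain a :: "real^'n" where a: "a \<noteq> 0" "\<forall>x \<in> span (f ` {..<M}). a \<bullet> x = 0"
      using span_not_UNIV_orthogonal by blast
    have "\<forall>k<M. \<bar>a \<bullet> f k\<bar> = \<bar>0 \<bullet> f k\<bar>" using a(2) by (auto intro: span_base)
    then have "0 = a \<or> 0 = - a" using pr unfolding phase_retrievable_def by blast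
    then show False using a(1) by auto
  qed
  define I where "I = insert ?L {0..<?N - 1}"
  define c :: "nat \<Rightarrow> real" where "c k = (if k = 0 then 1 else if k = ?L then -1 else 0)" for k
  have L0: "?L \<noteq> 0" using N2 by simp
  have "(\<Sum>i\<in>I. c i *\<^sub>R f i) = c ?L *\<^sub>R f ?L + (\<Sum>i\<in>{0..<?N - 1}. c i *\<^sub>R f i)"
    unfolding I_def by (subst sum.insert) auto
  also have "(\<Sum>i\<in>{0..<?N - 1}. c i *\<^sub>R f i) = (\<Sum>i\<in>insert 0 {1..<?N - 1}. c i *\<^sub>R f i)"
    using N2 by (intro sum.cong) auto
  also have "\<dots> = c 0 *\<^sub>R f 0 + (\<Sum>i\<in>{1..<?N - 1}. c i *\<^sub>R f i)" by (subst sum.insert) auto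
  also have "(\<Sum>i\<in>{1..<?N - 1}. c i *\<^sub>R f i) = 0" by (intro sum.neutral) (auto simp: c_def)
  also have "f ?L = f 0" by (simp add: f_def t_def)
  finally have "(\<Sum>i\<in>I. c i *\<^sub>R f i) = 0" using L0 by (simp add: c_def)
  moreover have "0 \<in> I" "c 0 \<noteq> 0" using N2 by (auto simp: I_def c_def)
  ultimately have "\<not> lin_indep_family f I" unfolding lin_indep_family_def by blast
  moreover have "I \<subseteq> {..<M}" using M N2 by (auto simp: I_def)
  moreover have "card I = ?N" using N2 by (simp add: I_def)
  ultimately show ?thesis using fr pr by blast
qed


theorem corollary2p7:
  shows "(\<forall>(f::nat \<Rightarrow> real^'n). is_frame (2 * CARD('n) - 1) f
            \<and> phase_retrievable (2 * CARD('n) - 1) f \<longrightarrow>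
            (\<forall>I. I \<subseteq> {..<2 * CARD('n) - 1} \<and> card I = CARD('n) \<longrightarrow> lin_indep_family f I))
       \<and> (CARD('n) \<ge> 2 \<longrightarrow> (\<forall>M. M \<ge> 2 * CARD('n) \<longrightarrow>
            (\<exists>f::nat \<Rightarrow> real^'n. is_frame M f \<and> phase_retrievable M f \<and>
               (\<exists>I. I \<subseteq> {..<M} \<and> card I = CARD('n) \<and> \<not> lin_indep_family f I))))"
  using part1 part2 by blast

end
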